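(* Let $s\ge 1$ and $d\ge 1$ be integers. A partition $\lambda$ is an $(s,s+1)$-core partition with $d$-distinct parts if and only if $\beta(\lambda)$ is a $d$-th order twin-free subset of $\{1,2,\ldots,s-1\}$.
   Context: A partition $\lambda=(\lambda_1,\ldots,\lambda_l)$ is a finite nonincreasing sequence of positive integers (the empty partition is allowed). $\lambda$ is a partition with $d$-distinct parts if $\lambda_i-\lambda_{i+1}\ge d$ for all $1\le i\le l-1$. In the Young diagram of $\lambda$, the hook length $h(i,j)$ of box $(i,j)$ is the number of boxes directly to its right, plus the number directly below it, plus one. $\lambda$ is an $(s_1,\ldots,s_t)$-core partition if no box has hook length equal to any of $s_1,\ldots,s_t$. The set $\beta(\lambda)=\{h(i,1):1\le i\le l\}$ is the set of first-column hook lengths. A set $X\subseteq\mathbb{N}$ is a $d$-th order twin-free set if there is no $x\in X$ and $k$ with $1\le k\le d$ such that $\{x,x+k\}\subseteq X$. *)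

theory Defs
  imports Main
begin

text \<open>A partition is a finite nonincreasing list of positive integers (rows of the
Young diagram, 0-indexed). The empty list is the empty partition.\<close>
definition is_partition :: "nat list \<Rightarrow> bool" where
  "is_partition la \<longleftrightarrow> sorted_wrt (\<ge>) la \<and> (\<forall>x \<in> set la. 0 < x)"

definition d_distinct :: "nat \<Rightarrow> nat list \<Rightarrow> bool" where
  "d_distinct d la \<longleftrightarrow> (\<forall>i. Suc i < length la \<longrightarrow> la ! (Suc i) + d \<le> la ! i)"

definition boxes :: "nat list \<Rightarrow> (nat \<times> nat) set" where
  "boxes la = {(i, j). i < length la \<and> j < la ! i}"

definition col_len :: "nat list \<Rightarrow> nat \<Rightarrow> nat" where
  "col_len la j = card {k. k < length la \<and> j < la ! k}"

definition hook :: "nat list \<Rightarrow> nat \<Rightarrow> nat \<Rightarrow> nat" where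
  "hook la i j = (la ! i - Suc j) + (col_len la j - Suc i) + 1"

definition is_core :: "nat set \<Rightarrow> nat list \<Rightarrow> bool" where
  "is_core S la \<longleftrightarrow> (\<forall>(i, j) \<in> boxes la. hook la i j \<notin> S)"

definition beta :: "nat list \<Rightarrow> nat set" where
  "beta la = {hook la i 0 | i. i < length la}"

definition twin_free :: "nat \<Rightarrow> nat set \<Rightarrow> bool" where
  "twin_free d X \<longleftrightarrow> \<not> (\<exists>x \<in> X. \<exists>k. 1 \<le> k \<and> k \<le> d \<and> x + k \<in> X)"

end

theory Submission
  imports Defs
begin

lemma part_le:
  assumes "is_partition la" "i \<le> j" "j < length la"
  shows "la ! j \<le> la ! i"
  using assms unfolding is_partition_def sorted_wrt_iff_nth_less
  by (cases "i = j") auto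

lemma part_pos:
  assumes "is_partition la" "i < length la"
  shows "0 < la ! i"
  using assms unfolding is_partition_def by auto

lemma col_len_le: "col_len la j \<le> length la"
proof -
  have "{k. k < length la \<and> j < la ! k} \<subseteq> {..<length la}" by auto
  then show ?thesis unfolding col_len_def by (metis card_lessThan card_mono finite_lessThan)
qed

lemma col_len0:
  assumes "is_partition la"
  shows "col_len la 0 = length la"
proof -
  have "{k. k < length la \<and> 0 < la ! k} = {..<length la}"
    using part_pos[OF assms] by auto
  then show ?thesis unfolding col_len_def by simp
qed

lemma hook0:
  assumes "is_partition la" "i < length la"
  shows "hook la i 0 = la ! i + (length la - Suc i)"
  using part_pos[OF assms] col_len0[OF assms(1)] unfolding hook_def by simp

lemma hook_le:
  assumes "is_partition la" "(i, j) \<in> boxes la"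
  shows "hook la i j \<le> hook la 0 0"
proof -
  have i: "i < length la" "j < la ! i" using assms(2) unfolding boxes_def by auto
  have "la ! i \<le> la ! 0" using part_le[OF assms(1), of 0 i] i by simp
  moreover have "col_len la j \<le> length la" by (rule col_len_le)
  moreover have "hook la 0 0 = la ! 0 + (length la - 1)" using hook0[OF assms(1), of 0] i by (cases la) auto
  ultimately show ?thesis using i unfolding hook_def by linarith
qed

lemma dd_mono:
  assumes "is_partition la" "d_distinct d la" "i \<le> j" "j < length la"
  shows "la ! j + d * (j - i) \<le> la ! i"
  using assms(3,4)
proof (induction j)
  case 0 then show ?case by simp
next
  case (Suc j)
  show ?case
  proof (cases "i = Suc j")
    case True then show ?thesis by simp
  next
    case False
    then have "i \<le> j" using Suc by simp
    with Suc have IH: "la ! j + d * (j - i) \<le> la ! i" by simp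
    have "la ! Suc j + d \<le> la ! j" using assms(2) Suc(3) unfolding d_distinct_def by blast
    moreover have "d * (Suc j - i) = d + d * (j - i)" using \<open>i \<le> j\<close>
      by (simp add: Suc_diff_le)
    ultimately show ?thesis using IH by simp
  qed
qed

lemma col_len_step:
  assumes "is_partition la" "d_distinct d la" "1 \<le> d"
  shows "col_len la j \<le> col_len la (Suc j) + 1"
proof -
  let ?A = "{k. k < length la \<and> Suc j < la ! k}"
  let ?B = "{k. k < length la \<and> la ! k = Suc j}"
  have sub: "{k. k < length la \<and> j < la ! k} \<subseteq> ?A \<union> ?B" by auto
  have fB: "finite ?B" and fA: "finite ?A" by auto
  have "card ?B \<le> Suc 0"
    unfolding card_le_Suc0_iff_eq[OF fB]
  proof (intro ballI, rule ccontr)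
    fix a b assume a: "a \<in> ?B" and b: "b \<in> ?B" and ne: "a \<noteq> b"
    show False
    proof (cases "a < b")
      case True
      have "la ! b + d * (b - a) \<le> la ! a" using dd_mono[OF assms(1,2), of a b] True b by simp
      moreover have "d * (b - a) \<ge> 1" using True assms(3) by simp
      ultimately show False using a b by simp
    next
      case False
      then have "b < a" using ne by simp
      have "la ! a + d * (a - b) \<le> la ! b" using dd_mono[OF assms(1,2), of b a] \<open>b < a\<close> a by simp
      moreover have "d * (a - b) \<ge> 1" using \<open>b < a\<close> assms(3) by simp
      ultimately show False using a b by simp
    qed
  qed
  have "card {k. k < length la \<and> j < la ! k} \<le> card (?A \<union> ?B)"
    using sub fA fB by (intro card_mono) auto
  also have "\<dots> \<le> card ?A + card ?B" by (rule card_Un_le)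
  finally show ?thesis unfolding col_len_def using \<open>card ?B \<le> Suc 0\<close> by simp
qed

lemma col_len_pos:
  assumes "j < la ! 0" "la \<noteq> []"
  shows "1 \<le> col_len la j"
proof -
  have "0 \<in> {k. k < length la \<and> j < la ! k}" using assms by simp
  then show ?thesis unfolding col_len_def
    by (metis (no_types, lifting) One_nat_def Suc_leI card_gt_0_iff empty_iff finite_nat_set_iff_bounded mem_Collect_eq)
qed

lemma hook_row0_step:
  assumes "is_partition la" "d_distinct d la" "1 \<le> d" "Suc j < la ! 0" "la \<noteq> []"
  shows "hook la 0 j \<le> hook la 0 (Suc j) + 2"
proof -
  have "col_len la j \<le> col_len la (Suc j) + 1" by (rule col_len_step[OF assms(1-3)])
  moreover have "1 \<le> col_len la j" "1 \<le> col_len la (Suc j)"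
    using col_len_pos[OF _ assms(5)] assms(4) by auto
  ultimately show ?thesis unfolding hook_def using assms(4) by simp
qed

lemma hook_row0_last:
  assumes "is_partition la" "d_distinct d la" "1 \<le> d" "la \<noteq> []"
  shows "hook la 0 (la ! 0 - 1) = 1"
proof -
  have p: "0 < la ! 0" using part_pos[OF assms(1)] assms(4) by simp
  have A: "k = 0" if k: "k < length la" "la ! 0 - 1 < la ! k" for k
  proof (rule ccontr)
    assume "k \<noteq> 0"
    then have "la ! k + d * k \<le> la ! 0" using dd_mono[OF assms(1,2), of 0 k] k by simp
    moreover have "d * k \<ge> 1" using \<open>k \<noteq> 0\<close> assms(3) by simp
    ultimately show False using k p by linarith
  qed
  have "{k. k < length la \<and> la ! 0 - 1 < la ! k} = {0}"
    using A p assms(4) by auto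
  then have "col_len la (la ! 0 - 1) = 1" unfolding col_len_def by simp
  then show ?thesis unfolding hook_def using p by simp
qed

lemma beta_gap:
  assumes "is_partition la" "d_distinct d la" "i < j" "j < length la"
  shows "hook la j 0 + d + 1 \<le> hook la i 0"
proof -
  have "la ! j + d * (j - i) \<le> la ! i" using dd_mono[OF assms(1,2)] assms by simp
  moreover have "d * (j - i) \<ge> d"
  proof -
    have "1 \<le> j - i" using assms(3) by simp
    then have "d * 1 \<le> d * (j - i)" by (rule mult_le_mono2)
    then show ?thesis by simp
  qed
  moreover have "hook la i 0 = la ! i + (length la - Suc i)" using hook0[OF assms(1)] assms by simp
  moreover have "hook la j 0 = la ! j + (length la - Suc j)" using hook0[OF assms(1)] assms by simp
  ultimately show ?thesis using assms(3,4) by linarith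
qed

theorem mainTheorem3:
  fixes s d :: nat and la :: "nat list"
  assumes "1 \<le> s" and "1 \<le> d" and "is_partition la"
  shows "(is_core {s, s + 1} la \<and> d_distinct d la) \<longleftrightarrow>
         (beta la \<subseteq> {1..s - 1} \<and> twin_free d (beta la))"
proof
  assume H: "is_core {s, s + 1} la \<and> d_distinct d la"
  then have core: "is_core {s, s + 1} la" and dd: "d_distinct d la" by auto
  have noeq: "hook la j 0 \<noteq> hook la i 0 + k"
    if k: "1 \<le> k" "k \<le> d" and i: "i < length la" and j: "j < length la" for i j k
  proof
    assume eq: "hook la j 0 = hook la i 0 + k"
    show False
    proof (cases "i < j")
      case True
      then show ?thesis using beta_gap[OF assms(3) dd True j] eq k by simp
    next
      case False
      then have "j < i \<or> j = i" by auto
      then show ?thesis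
      proof
        assume "j < i"
        then show ?thesis using beta_gap[OF assms(3) dd \<open>j < i\<close> i] eq k by simp
      qed (use eq k in simp)
    qed
  qed
  have tf: "twin_free d (beta la)"
    unfolding twin_free_def beta_def using noeq by fastforce
  have sub: "beta la \<subseteq> {1..s - 1}"
  proof (cases "la = []")
    case True then show ?thesis unfolding beta_def by simp
  next
    case ne: False
    have b0: "hook la 0 0 < s"
    proof (rule ccontr)
      assume "\<not> hook la 0 0 < s"
      then have ge: "s \<le> hook la 0 0" by simp
      have p: "0 < la ! 0" using part_pos[OF assms(3)] ne by simp
      define J where "J = {j. j < la ! 0 \<and> s \<le> hook la 0 j}"
      have fJ: "finite J" unfolding J_def by simp
      have "0 \<in> J" unfolding J_def using p ge by simp
      define m where "m = Max J"
      have mJ: "m \<in> J" unfolding m_def using fJ \<open>0 \<in> J\<close> Max_in by blast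
      have mmax: "\<And>j. j \<in> J \<Longrightarrow> j \<le> m" unfolding m_def using fJ by simp
      have hm: "hook la 0 m = s \<or> hook la 0 m = s + 1"
      proof (cases "Suc m < la ! 0")
        case True
        have "Suc m \<notin> J" using mmax by fastforce
        then have "hook la 0 (Suc m) < s" using True unfolding J_def by simp
        moreover have "hook la 0 m \<le> hook la 0 (Suc m) + 2"
          by (rule hook_row0_step[OF assms(3) dd assms(2) True ne])
        ultimately show ?thesis using mJ unfolding J_def by auto
      next
        case False
        then have "m = la ! 0 - 1" using mJ unfolding J_def by auto
        then have "hook la 0 m = 1" using hook_row0_last[OF assms(3) dd assms(2) ne] by simp
        then show ?thesis using mJ assms(1) unfolding J_def by simp
      qed
      have "(0, m) \<in> boxes la" using mJ ne unfolding J_def boxes_def by simp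
      then show False using core hm unfolding is_core_def by auto
    qed
    show ?thesis unfolding beta_def
    proof clarify
      fix i assume i: "i < length la"
      have "hook la i 0 \<le> hook la 0 0"
        using hook_le[OF assms(3), of i 0] i part_pos[OF assms(3) i] unfolding boxes_def by simp
      moreover have "1 \<le> hook la i 0" using hook0[OF assms(3) i] part_pos[OF assms(3) i] by simp
      ultimately show "hook la i 0 \<in> {1..s - 1}" using b0 by simp
    qed
  qed
  show "beta la \<subseteq> {1..s - 1} \<and> twin_free d (beta la)" using sub tf by simp
next
  assume H: "beta la \<subseteq> {1..s - 1} \<and> twin_free d (beta la)"
  have core: "is_core {s, s + 1} la"
    unfolding is_core_def
  proof clarify
    fix i j assume b: "(i, j) \<in> boxes la" and hs: "hook la i j \<in> {s, s + 1}"
    then have "0 < length la" unfolding boxes_def by auto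
    then have "hook la 0 0 \<in> beta la" unfolding beta_def by auto
    then have "hook la 0 0 \<le> s - 1" using H by auto
    then show False using hook_le[OF assms(3) b] hs assms(1) by auto
  qed
  have dd: "d_distinct d la"
    unfolding d_distinct_def
  proof (intro allI impI, rule ccontr)
    fix i assume i: "Suc i < length la" and nd: "\<not> la ! Suc i + d \<le> la ! i"
    have le: "la ! Suc i \<le> la ! i" using part_le[OF assms(3), of i "Suc i"] i by simp
    define k where "k = la ! i - la ! Suc i + 1"
    have "hook la i 0 = hook la (Suc i) 0 + k"
      using hook0[OF assms(3), of i] hook0[OF assms(3), of "Suc i"] i le unfolding k_def by simp
    moreover have "hook la i 0 \<in> beta la" "hook la (Suc i) 0 \<in> beta la"
      using i unfolding beta_def by auto
    moreover have "1 \<le> k" "k \<le> d" using nd le unfolding k_def by auto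
    ultimately show False using H unfolding twin_free_def by metis
  qed
  show "is_core {s, s + 1} la \<and> d_distinct d la" using core dd by simp
qed

end
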